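(* Let $\Pi=(P_R,\psi)$ be a 3SS scheme with domain $\mathcal S$, let $P_{\mathbf X}$ be any distribution with support contained in $\mathcal S$, $\mathbf X=(X_1,X_2,X_3)\sim P_{\mathbf X}$, $R\sim P_R$ independent of $\mathbf X$, and $(W_{12},W_{23},W_{31})=\psi(\mathbf X,R)$. Then $$I(W_{12};W_{23}\mid W_{31})\ \ge\ RI(X_1;X_3),\quad I(W_{23};W_{31}\mid W_{12})\ \ge\ RI(X_2;X_1),\quad I(W_{31};W_{12}\mid W_{23})\ \ge\ RI(X_3;X_2).$$
   Context: Setup: $\mathcal X_1,\mathcal X_2,\mathcal X_3$ finite, $\mathcal S\subseteq\mathcal X_1\times\mathcal X_2\times\mathcal X_3$ nonempty. A distribution scheme $(P_R,\psi)$ consists of a distribution $P_R$ on a finite set $\mathcal R$ and a map $\psi:\mathcal S\times\mathcal R\to\mathcal W_{12}\times\mathcal W_{23}\times\mathcal W_{31}$ (finite share alphabets); shares are $(W_{12},W_{23},W_{31})=\psi(\mathbf x,R)$. Party $P_1$ sees $V_1=(W_{12},W_{31})$, $P_2$ sees $V_2=(W_{23},W_{12})$, $P_3$ sees $V_3=(W_{31},W_{23})$. It is a 3SS scheme if (Correctness) for each $i$ there is a function $\phi_i$ with $\Pr[\phi_i(V_i)=x_i]=1$ for every $\mathbf x\in\mathcal S$, and (Perfect privacy) for each $i$ and all $\mathbf x,\mathbf x'\in\mathcal S$ with $x_i=x'_i$, $V_i$ has the same distribution under $\mathbf x$ as under $\mathbf x'$. Residual information: for jointly distributed discrete $A,B$,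 let $A\wedge B$ denote the Gács–Körner common part (the maximal common function: the label of the connected component containing $(A,B)$ in the bipartite graph on $\mathrm{supp}(A)\cup\mathrm{supp}(B)$ with an edge $(a,b)$ iff $P_{AB}(a,b)>0$); then $RI(A;B):=I(A;B)-H(A\wedge B)=I(A;B\mid A\wedge B)$. *)

theory Defs
  imports "HOL-Probability.Probability"
begin

definition entropy_pmf :: "'a pmf \<Rightarrow> real" where
  "entropy_pmf p = - (\<Sum>x\<in>set_pmf p. pmf p x * log 2 (pmf p x))"

definition ent :: "'z pmf \<Rightarrow> ('z \<Rightarrow> 'a) \<Rightarrow> real" where
  "ent J f = entropy_pmf (map_pmf f J)"

definition mi :: "'z pmf \<Rightarrow> ('z \<Rightarrow> 'a) \<Rightarrow> ('z \<Rightarrow> 'b) \<Rightarrow> real" where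
  "mi J f g = ent J f + ent J g - ent J (\<lambda>z. (f z, g z))"

definition cmi :: "'z pmf \<Rightarrow> ('z \<Rightarrow> 'a) \<Rightarrow> ('z \<Rightarrow> 'b) \<Rightarrow> ('z \<Rightarrow> 'c) \<Rightarrow> real" where
  "cmi J f g h = ent J (\<lambda>z. (f z, h z)) + ent J (\<lambda>z. (g z, h z))
                 - ent J (\<lambda>z. (f z, g z, h z)) - ent J h"

text \<open>Gacs--Koerner common part of a pair distribution q on A x B:
  two A-values are linked if they share a B-value with positive joint
  probability; the common part of a sample (a,b) is the connected component
  of the characteristic bipartite graph containing (a,b), labelled by the set
  of A-vertices of that component.\<close>
definition gk_link :: "('a \<times> 'b) pmf \<Rightarrow> ('a \<times> 'a) set" where
  "gk_link q = {(a, a'). \<exists>b. pmf q (a, b) > 0 \<and> pmf q (a', b) > 0}"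

definition gk_common :: "('a \<times> 'b) pmf \<Rightarrow> 'a \<times> 'b \<Rightarrow> 'a set" where
  "gk_common q ab = {a'. (fst ab, a') \<in> (gk_link q)\<^sup>*}"

definition RI :: "('a \<times> 'b) pmf \<Rightarrow> real" where
  "RI q = mi q fst snd - ent q (gk_common q)"

definition view1 :: "'w1 \<times> 'w2 \<times> 'w3 \<Rightarrow> 'w1 \<times> 'w3" where
  "view1 w = (case w of (w12, w23, w31) \<Rightarrow> (w12, w31))"
definition view2 :: "'w1 \<times> 'w2 \<times> 'w3 \<Rightarrow> 'w2 \<times> 'w1" where
  "view2 w = (case w of (w12, w23, w31) \<Rightarrow> (w23, w12))"
definition view3 :: "'w1 \<times> 'w2 \<times> 'w3 \<Rightarrow> 'w3 \<times> 'w2" where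
  "view3 w = (case w of (w12, w23, w31) \<Rightarrow> (w31, w23))"

definition sec1 :: "'x1 \<times> 'x2 \<times> 'x3 \<Rightarrow> 'x1" where "sec1 x = fst x"
definition sec2 :: "'x1 \<times> 'x2 \<times> 'x3 \<Rightarrow> 'x2" where "sec2 x = fst (snd x)"
definition sec3 :: "'x1 \<times> 'x2 \<times> 'x3 \<Rightarrow> 'x3" where "sec3 x = snd (snd x)"

definition is_3SS ::
  "('x1 \<times> 'x2 \<times> 'x3) set \<Rightarrow> 'r pmf \<Rightarrow> ('x1 \<times> 'x2 \<times> 'x3 \<Rightarrow> 'r \<Rightarrow> 'w1 \<times> 'w2 \<times> 'w3) \<Rightarrow> bool"
where
  "is_3SS S PR psi \<longleftrightarrow>
    (\<exists>\<phi>1. \<forall>x\<in>S. measure_pmf.prob PR {r. \<phi>1 (view1 (psi x r)) = sec1 x} = 1) \<and>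
    (\<exists>\<phi>2. \<forall>x\<in>S. measure_pmf.prob PR {r. \<phi>2 (view2 (psi x r)) = sec2 x} = 1) \<and>
    (\<exists>\<phi>3. \<forall>x\<in>S. measure_pmf.prob PR {r. \<phi>3 (view3 (psi x r)) = sec3 x} = 1) \<and>
    (\<forall>x\<in>S. \<forall>x'\<in>S. sec1 x = sec1 x' \<longrightarrow>
        map_pmf (\<lambda>r. view1 (psi x r)) PR = map_pmf (\<lambda>r. view1 (psi x' r)) PR) \<and>
    (\<forall>x\<in>S. \<forall>x'\<in>S. sec2 x = sec2 x' \<longrightarrow>
        map_pmf (\<lambda>r. view2 (psi x r)) PR = map_pmf (\<lambda>r. view2 (psi x' r)) PR) \<and>
    (\<forall>x\<in>S. \<forall>x'\<in>S. sec3 x = sec3 x' \<longrightarrow>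
        map_pmf (\<lambda>r. view3 (psi x r)) PR = map_pmf (\<lambda>r. view3 (psi x' r)) PR)"

definition joint :: "'x pmf \<Rightarrow> 'r pmf \<Rightarrow> ('x \<Rightarrow> 'r \<Rightarrow> 'w) \<Rightarrow> ('x \<times> 'w) pmf" where
  "joint PX PR psi = bind_pmf PX (\<lambda>x. bind_pmf PR (\<lambda>r. return_pmf (x, psi x r)))"

definition W12 :: "'x \<times> 'w1 \<times> 'w2 \<times> 'w3 \<Rightarrow> 'w1" where "W12 z = fst (snd z)"
definition W23 :: "'x \<times> 'w1 \<times> 'w2 \<times> 'w3 \<Rightarrow> 'w2" where "W23 z = fst (snd (snd z))"
definition W31 :: "'x \<times> 'w1 \<times> 'w2 \<times> 'w3 \<Rightarrow> 'w3" where "W31 z = snd (snd (snd z))"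

end

theory Submission
  imports Defs
begin

lemma sf_pmf: "simple_function (measure_pmf (J::'z::finite pmf)) F"
  unfolding simple_function_def by simp

definition PP :: "'z pmf \<Rightarrow> ('z \<Rightarrow> 'a) \<Rightarrow> 'z \<Rightarrow> real" where
  "PP J f z = measure_pmf.prob J {z'. f z' = f z}"

lemma sum_group_pmf:
  fixes J :: "'z::finite pmf"
  shows "(\<Sum>y\<in>f ` UNIV. measure_pmf.prob J (f -` {y}) * g y) = (\<Sum>z\<in>UNIV. pmf J z * g (f z))"
proof -
  have "(\<Sum>z\<in>UNIV. pmf J z * g (f z)) = (\<Sum>y\<in>f ` UNIV. \<Sum>z\<in>{x. x \<in> UNIV \<and> f x = y}. pmf J z * g (f z))"
    by (rule sum.image_gen) simp
  also have "\<dots> = (\<Sum>y\<in>f ` UNIV. (\<Sum>z\<in>{x. f x = y}. pmf J z) * g y)"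
    by (simp add: sum_distrib_right)
  also have "\<dots> = (\<Sum>y\<in>f ` UNIV. measure_pmf.prob J (f -` {y}) * g y)"
    by (simp add: measure_measure_pmf_finite vimage_def)
  finally show ?thesis by simp
qed

lemma ent_exp:
  fixes J :: "'z::finite pmf"
  shows "ent J f = - (\<Sum>z\<in>UNIV. pmf J z * log 2 (PP J f z))"
proof -
  have "entropy_pmf (map_pmf f J) = - (\<Sum>y\<in>f ` UNIV. pmf (map_pmf f J) y * log 2 (pmf (map_pmf f J) y))"
    unfolding entropy_pmf_def
    proof (rule arg_cong[where f=uminus], rule sum.mono_neutral_left)
    show "\<forall>i\<in>f ` UNIV - set_pmf (map_pmf f J). pmf (map_pmf f J) i * log 2 (pmf (map_pmf f J) i) = 0"
      by (simp add: set_pmf_iff del: set_map_pmf)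
  qed auto
  also have "\<dots> = - (\<Sum>y\<in>f ` UNIV. measure_pmf.prob J (f -` {y}) * log 2 (measure_pmf.prob J (f -` {y})))"
    by (simp add: pmf_map)
  also have "\<dots> = - (\<Sum>z\<in>UNIV. pmf J z * log 2 (measure_pmf.prob J (f -` {f z})))"
    by (subst sum_group_pmf) simp
  finally show ?thesis unfolding ent_def PP_def by (simp add: vimage_def)
qed

lemma PP_pos: "z \<in> set_pmf J \<Longrightarrow> PP J f z > 0"
  unfolding PP_def
  by (rule measure_pmf_posI[of z]) auto

lemma cmi_sum:
  fixes J :: "'z::finite pmf"
  shows "cmi J f g h = (\<Sum>z\<in>UNIV. pmf J z * log 2 (PP J (\<lambda>z. (f z, g z, h z)) z /
            (PP J (\<lambda>z. (f z, h z)) z * (PP J (\<lambda>z. (g z, h z)) z / PP J h z))))"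
proof -
  have "(\<Sum>z\<in>UNIV. pmf J z * log 2 (PP J (\<lambda>z. (f z, g z, h z)) z /
            (PP J (\<lambda>z. (f z, h z)) z * (PP J (\<lambda>z. (g z, h z)) z / PP J h z))))
      = (\<Sum>z\<in>UNIV. pmf J z * log 2 (PP J (\<lambda>z. (f z, g z, h z)) z) + pmf J z * log 2 (PP J h z)
          - pmf J z * log 2 (PP J (\<lambda>z. (f z, h z)) z) - pmf J z * log 2 (PP J (\<lambda>z. (g z, h z)) z))"
  proof (rule sum.cong[OF refl])
    fix z
    show "pmf J z * log 2 (PP J (\<lambda>z. (f z, g z, h z)) z /
            (PP J (\<lambda>z. (f z, h z)) z * (PP J (\<lambda>z. (g z, h z)) z / PP J h z))) =
          pmf J z * log 2 (PP J (\<lambda>z. (f z, g z, h z)) z) + pmf J z * log 2 (PP J h z)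
          - pmf J z * log 2 (PP J (\<lambda>z. (f z, h z)) z) - pmf J z * log 2 (PP J (\<lambda>z. (g z, h z)) z)"
    proof (cases "z \<in> set_pmf J")
      case True
      note p = PP_pos[OF True]
      have e: "log 2 (PP J (\<lambda>z. (f z, g z, h z)) z /
            (PP J (\<lambda>z. (f z, h z)) z * (PP J (\<lambda>z. (g z, h z)) z / PP J h z))) =
           log 2 (PP J (\<lambda>z. (f z, g z, h z)) z) + log 2 (PP J h z)
          - log 2 (PP J (\<lambda>z. (f z, h z)) z) - log 2 (PP J (\<lambda>z. (g z, h z)) z)"
        using p[of "\<lambda>z. (f z, g z, h z)"] p[of h] p[of "\<lambda>z. (f z, h z)"] p[of "\<lambda>z. (g z, h z)"]
        by (simp add: log_divide log_mult)
      show ?thesis by (subst e) (simp add: algebra_simps)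
    next
      case False
      then show ?thesis by (simp add: set_pmf_iff)
    qed
  qed
  also have "\<dots> = cmi J f g h"
    unfolding cmi_def ent_exp by (simp add: sum.distrib sum_subtractf)
  finally show ?thesis by simp
qed

lemma cmi_nonneg:
  fixes J :: "'z::finite pmf"
  shows "0 \<le> cmi J f g h"
proof -
  interpret I: information_space "measure_pmf J" 2
    by (rule information_space.intro[OF measure_pmf.prob_space_axioms]) (simp add: information_space_axioms_def)
  define G where "G = (\<lambda>(x, y, w). log 2 (measure_pmf.prob J ((\<lambda>x. (f x, g x, h x)) -` {(x, y, w)}) /
       (measure_pmf.prob J ((\<lambda>x. (f x, h x)) -` {(x, w)}) *
        (measure_pmf.prob J ((\<lambda>x. (g x, h x)) -` {(y, w)}) / measure_pmf.prob J (h -` {w})))))"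
  note sd = measure_pmf.simple_distributedI[OF sf_pmf measure_nonneg refl]
  note A = I.conditional_mutual_information_nonneg[OF sf_pmf sf_pmf sf_pmf, of f g h]
  note B = I.conditional_mutual_information_eq[where X=f and Y=g and Z=h, OF sd sd sd sd]
  have "0 \<le> (\<Sum>(x, y, w)\<in>(\<lambda>x. (f x, g x, h x)) ` UNIV.
     measure_pmf.prob J ((\<lambda>x. (f x, g x, h x)) -` {(x, y, w)}) *
     log 2 (measure_pmf.prob J ((\<lambda>x. (f x, g x, h x)) -` {(x, y, w)}) /
       (measure_pmf.prob J ((\<lambda>x. (f x, h x)) -` {(x, w)}) *
        (measure_pmf.prob J ((\<lambda>x. (g x, h x)) -` {(y, w)}) / measure_pmf.prob J (h -` {w})))))"
    using A B by simp
  also have "\<dots> = (\<Sum>t\<in>(\<lambda>x. (f x, g x, h x)) ` UNIV.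
      measure_pmf.prob J ((\<lambda>x. (f x, g x, h x)) -` {t}) * G t)"
    by (intro sum.cong refl) (auto simp: G_def split: prod.splits)
  also have "\<dots> = (\<Sum>z\<in>UNIV. pmf J z * G (f z, g z, h z))"
    by (rule sum_group_pmf)
  also have "\<dots> = cmi J f g h"
    unfolding cmi_sum G_def by (intro sum.cong refl) (simp add: PP_def vimage_def)
  finally show ?thesis .
qed

lemma ent_cong:
  fixes J :: "'z::finite pmf"
  assumes "\<And>z z'. z \<in> set_pmf J \<Longrightarrow> z' \<in> set_pmf J \<Longrightarrow> (f z = f z') = (g z = g z')"
  shows "ent J f = ent J g"
proof -
  have "PP J f z = PP J g z" if z: "z \<in> set_pmf J" for z
  proof -
    have "{z'. f z' = f z} \<inter> set_pmf J = {z'. g z' = g z} \<inter> set_pmf J"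
      using assms[OF z] by (auto simp: eq_commute)
    then show ?thesis unfolding PP_def by (metis measure_Int_set_pmf)
  qed
  then show ?thesis unfolding ent_exp
    by (intro arg_cong[where f=uminus] sum.cong refl) (metis mult_zero_left set_pmf_iff)
qed

lemma ent_map: "ent (map_pmf P J) f = ent J (\<lambda>z. f (P z))"
  unfolding ent_def by (simp add: map_pmf_comp)

lemma core_step1:
  fixes J :: "'z::finite pmf"
  assumes hA: "\<And>z. z \<in> set_pmf J \<Longrightarrow> U z = fu (a z, c z)"
    and hB: "\<And>z. z \<in> set_pmf J \<Longrightarrow> V z = fv (c z, b z)"
  shows "cmi J U V c \<le> cmi J a b c"
proof -
  have N1: "0 \<le> cmi J a b (\<lambda>z. (V z, c z))" by (rule cmi_nonneg)
  have N2: "0 \<le> cmi J a V (\<lambda>z. (U z, c z))" by (rule cmi_nonneg)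
  have E1: "ent J (\<lambda>z. (b z, V z, c z)) = ent J (\<lambda>z. (b z, c z))"
    by (rule ent_cong) (auto simp: hB)
  have E2: "ent J (\<lambda>z. (a z, b z, V z, c z)) = ent J (\<lambda>z. (a z, b z, c z))"
    by (rule ent_cong) (auto simp: hB)
  have E3: "ent J (\<lambda>z. (a z, U z, c z)) = ent J (\<lambda>z. (a z, c z))"
    by (rule ent_cong) (auto simp: hA)
  have E4: "ent J (\<lambda>z. (V z, U z, c z)) = ent J (\<lambda>z. (U z, V z, c z))"
    by (rule ent_cong) auto
  have E5: "ent J (\<lambda>z. (a z, V z, U z, c z)) = ent J (\<lambda>z. (a z, V z, c z))"
    by (rule ent_cong) (auto simp: hA)
  show ?thesis using N1 N2 E1 E2 E3 E4 E5 unfolding cmi_def by simp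
qed

lemma core_step2:
  fixes J :: "'z::finite pmf"
  assumes hK1: "\<And>z. K z = ku (U z)"
    and hK3: "\<And>z. z \<in> set_pmf J \<Longrightarrow> K z = kv (V z)"
    and hX1: "\<And>z. U z = su (X z)"
    and hX3: "\<And>z. V z = sv (X z)"
    and M: "ent J (\<lambda>z. (X z, c z)) + ent J K = ent J X + ent J (\<lambda>z. (K z, c z))"
  shows "ent J U + ent J V - ent J (\<lambda>z. (U z, V z)) - ent J K \<le> cmi J U V c"
proof -
  have N4: "0 \<le> cmi J X c (\<lambda>z. (U z, V z, K z))" by (rule cmi_nonneg)
  have N5: "0 \<le> cmi J V c (\<lambda>z. (U z, K z))" by (rule cmi_nonneg)
  have N6: "0 \<le> cmi J K K c" by (rule cmi_nonneg)
  have N7: "0 \<le> cmi J U c (\<lambda>z. (V z, K z))" by (rule cmi_nonneg)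
  have E1: "ent J (\<lambda>z. (X z, U z, V z, K z)) = ent J X"
    by (rule ent_cong) (auto simp: hK1 hX1 hX3)
  have E2: "ent J (\<lambda>z. (X z, c z, U z, V z, K z)) = ent J (\<lambda>z. (X z, c z))"
    by (rule ent_cong) (auto simp: hK1 hX1 hX3)
  have E3: "ent J (\<lambda>z. (U z, V z, K z)) = ent J (\<lambda>z. (U z, V z))"
    by (rule ent_cong) (auto simp: hK1)
  have E4: "ent J (\<lambda>z. (V z, U z, K z)) = ent J (\<lambda>z. (U z, V z))"
    by (rule ent_cong) (auto simp: hK1)
  have E5: "ent J (\<lambda>z. (U z, K z)) = ent J U"
    by (rule ent_cong) (auto simp: hK1)
  have E6: "ent J (\<lambda>z. (V z, c z, U z, K z)) = ent J (\<lambda>z. (c z, U z, V z, K z))"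
    by (rule ent_cong) auto
  have E7: "ent J (\<lambda>z. (U z, c z, V z, K z)) = ent J (\<lambda>z. (c z, U z, V z, K z))"
    by (rule ent_cong) auto
  have E8: "ent J (\<lambda>z. (K z, K z, c z)) = ent J (\<lambda>z. (K z, c z))"
    by (rule ent_cong) auto
  have E9: "ent J (\<lambda>z. (V z, K z)) = ent J V"
    by (rule ent_cong) (auto simp: hK3)
  have E10: "ent J (\<lambda>z. (U z, c z)) = ent J (\<lambda>z. (c z, U z, K z))"
    by (rule ent_cong) (auto simp: hK1)
  have E11: "ent J (\<lambda>z. (V z, c z)) = ent J (\<lambda>z. (c z, V z, K z))"
    by (rule ent_cong) (auto simp: hK3)
  have E12: "ent J (\<lambda>z. (U z, V z, c z)) = ent J (\<lambda>z. (c z, U z, V z, K z))"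
    by (rule ent_cong) (auto simp: hK1)
  show ?thesis using N4 N5 N6 N7 E1 E2 E3 E4 E5 E6 E7 E8 E9 E10 E11 E12 M unfolding cmi_def by simp
qed

lemma joint_bind: "joint PX PR psi = bind_pmf PX (\<lambda>x. map_pmf (\<lambda>r. (x, psi x r)) PR)"
  unfolding joint_def map_pmf_def ..

lemma set_joint: "z \<in> set_pmf (joint PX PR psi) \<Longrightarrow> \<exists>x\<in>set_pmf PX. \<exists>r\<in>set_pmf PR. z = (x, psi x r)"
  unfolding joint_bind by auto

lemma measure_joint:
  fixes PX :: "'x::finite pmf" and PR :: "'r::finite pmf" and psi :: "'x \<Rightarrow> 'r \<Rightarrow> 'w::finite"
  shows "measure_pmf.prob (joint PX PR psi) A = (\<Sum>x\<in>UNIV. pmf PX x * measure_pmf.prob PR {r. (x, psi x r) \<in> A})"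
proof -
  have "measure_pmf.prob (joint PX PR psi) A = (\<Sum>z\<in>A. pmf (joint PX PR psi) z)"
    by (simp add: measure_measure_pmf_finite)
  also have "\<dots> = (\<Sum>z\<in>A. \<Sum>x\<in>UNIV. pmf (map_pmf (\<lambda>r. (x, psi x r)) PR) z * pmf PX x)"
    unfolding joint_bind pmf_bind
    by (intro sum.cong refl integral_measure_pmf_real) auto
  also have "\<dots> = (\<Sum>x\<in>UNIV. pmf PX x * (\<Sum>z\<in>A. pmf (map_pmf (\<lambda>r. (x, psi x r)) PR) z))"
    by (subst sum.swap) (simp add: sum_distrib_left mult.commute)
  also have "\<dots> = (\<Sum>x\<in>UNIV. pmf PX x * measure_pmf.prob PR {r. (x, psi x r) \<in> A})"
    by (simp add: measure_measure_pmf_finite[symmetric] vimage_def)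
  finally show ?thesis .
qed

lemma map_fst_joint: "map_pmf fst (joint PX PR psi) = PX"
  unfolding joint_bind map_bind_pmf map_pmf_comp by (simp add: map_pmf_const bind_return_pmf')

lemma q_joint: "map_pmf (\<lambda>z. (sa (fst z), sb (fst z))) (joint PX PR psi) = map_pmf (\<lambda>x. (sa x, sb x)) PX"
proof -
  have "map_pmf (\<lambda>z. (sa (fst z), sb (fst z))) (joint PX PR psi)
      = map_pmf (\<lambda>x. (sa x, sb x)) (map_pmf fst (joint PX PR psi))"
    by (simp add: map_pmf_comp)
  then show ?thesis by (simp add: map_fst_joint)
qed

lemma link_iff:
  "(u, u') \<in> gk_link (map_pmf (\<lambda>x. (sa x, sb x)) PX) \<longleftrightarrow>
    (\<exists>y\<in>set_pmf PX. \<exists>y'\<in>set_pmf PX. sa y = u \<and> sa y' = u' \<and> sb y = sb y')"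
  unfolding gk_link_def by (auto simp: pmf_positive_iff)

lemma gk_const:
  assumes P1: "\<And>x x'. x \<in> set_pmf PX \<Longrightarrow> x' \<in> set_pmf PX \<Longrightarrow> sa x = sa x' \<Longrightarrow> \<alpha> x = \<alpha> x'"
    and P3: "\<And>x x'. x \<in> set_pmf PX \<Longrightarrow> x' \<in> set_pmf PX \<Longrightarrow> sb x = sb x' \<Longrightarrow> \<alpha> x = \<alpha> x'"
    and x: "x \<in> set_pmf PX" and x': "x' \<in> set_pmf PX"
    and eq: "gk_common (map_pmf (\<lambda>x. (sa x, sb x)) PX) (sa x, sb x) =
             gk_common (map_pmf (\<lambda>x. (sa x, sb x)) PX) (sa x', sb x')"
  shows "\<alpha> x = \<alpha> x'"
proof -
  let ?q = "map_pmf (\<lambda>x. (sa x, sb x)) PX"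
  define A where "A u = \<alpha> (SOME y. y \<in> set_pmf PX \<and> sa y = u)" for u
  have Ay: "A (sa y) = \<alpha> y" if "y \<in> set_pmf PX" for y
  proof -
    have "\<exists>y'. y' \<in> set_pmf PX \<and> sa y' = sa y" using that by blast
    then have "(SOME y'. y' \<in> set_pmf PX \<and> sa y' = sa y) \<in> set_pmf PX \<and>
               sa (SOME y'. y' \<in> set_pmf PX \<and> sa y' = sa y) = sa y"
      by (rule someI_ex)
    then show ?thesis unfolding A_def using P1 that by blast
  qed
  have step: "A u = A u'" if "(u, u') \<in> gk_link ?q" for u u'
  proof -
    from that obtain y y' where "y \<in> set_pmf PX" "y' \<in> set_pmf PX" "sa y = u" "sa y' = u'" "sb y = sb y'"
      unfolding link_iff by blast
    then show ?thesis using Ay P3 by metis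
  qed
  have rt: "A u = A u'" if "(u, u') \<in> (gk_link ?q)\<^sup>*" for u u'
    using that by (induction rule: rtrancl_induct) (auto dest: step)
  have "sa x' \<in> gk_common ?q (sa x', sb x')" unfolding gk_common_def by simp
  then have "sa x' \<in> gk_common ?q (sa x, sb x)" using eq by simp
  then have "(sa x, sa x') \<in> (gk_link ?q)\<^sup>*" unfolding gk_common_def by simp
  then have "A (sa x) = A (sa x')" by (rule rt)
  then show ?thesis using Ay x x' by simp
qed

lemma gk_s3:
  assumes x: "x \<in> set_pmf PX" and x': "x' \<in> set_pmf PX" and e: "sb x = sb x'"
  shows "gk_common (map_pmf (\<lambda>x. (sa x, sb x)) PX) (sa x, sb x) =
         gk_common (map_pmf (\<lambda>x. (sa x, sb x)) PX) (sa x', sb x')"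
proof -
  let ?q = "map_pmf (\<lambda>x. (sa x, sb x)) PX"
  have l1: "(sa x, sa x') \<in> gk_link ?q" and l2: "(sa x', sa x) \<in> gk_link ?q"
    unfolding link_iff using x x' e by metis+
  show ?thesis unfolding gk_common_def
    using l1 l2 by (auto intro: converse_rtrancl_into_rtrancl)
qed

lemma plog_mult: "(a::real) > 0 \<Longrightarrow> b > 0 \<Longrightarrow> p * log 2 (a * b) = p * log 2 a + p * log 2 b"
  by (simp add: log_mult distrib_left)

lemma markov:
  fixes PX :: "'x::finite pmf" and PR :: "'r::finite pmf" and psi :: "'x \<Rightarrow> 'r \<Rightarrow> 'w::finite"
  assumes Pc: "\<And>x x'. x \<in> set_pmf PX \<Longrightarrow> x' \<in> set_pmf PX \<Longrightarrow> \<kappa> x = \<kappa> x' \<Longrightarrow>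
       map_pmf (\<lambda>r. C (psi x r)) PR = map_pmf (\<lambda>r. C (psi x' r)) PR"
  defines "J \<equiv> joint PX PR psi"
  shows "ent J (\<lambda>z. (fst z, C (snd z))) + ent J (\<lambda>z. \<kappa> (fst z)) =
         ent J fst + ent J (\<lambda>z. (\<kappa> (fst z), C (snd z)))"
proof -
  have key: "PP J (\<lambda>z. (fst z, C (snd z))) z0 * PP J (\<lambda>z. \<kappa> (fst z)) z0 =
             PP J fst z0 * PP J (\<lambda>z. (\<kappa> (fst z), C (snd z))) z0" if z0: "z0 \<in> set_pmf J" for z0
  proof -
    obtain x0 w where zz: "z0 = (x0, w)" by (cases z0)
    have x0: "x0 \<in> set_pmf PX" using set_joint[of z0 PX PR psi] z0 zz unfolding J_def by auto
    define w0 where "w0 = C w"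
    define \<beta> where "\<beta> x = measure_pmf.prob PR {r. C (psi x r) = w0}" for x
    define S where "S = (\<Sum>x\<in>UNIV. pmf PX x * (if \<kappa> x = \<kappa> x0 then 1 else 0))"
    have a: "PP J (\<lambda>z. (fst z, C (snd z))) z0 = pmf PX x0 * \<beta> x0"
    proof -
      have "PP J (\<lambda>z. (fst z, C (snd z))) z0 =
            (\<Sum>x\<in>UNIV. pmf PX x * measure_pmf.prob PR {r. x = x0 \<and> C (psi x r) = w0})"
        unfolding PP_def J_def measure_joint by (simp add: zz w0_def)
      also have "\<dots> = (\<Sum>x\<in>UNIV. if x = x0 then pmf PX x0 * \<beta> x0 else 0)"
        by (intro sum.cong refl) (simp add: \<beta>_def)
      finally show ?thesis by simp
    qed
    have b: "PP J fst z0 = pmf PX x0"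
    proof -
      have "PP J fst z0 = (\<Sum>x\<in>UNIV. pmf PX x * measure_pmf.prob PR {r. x = x0})"
        unfolding PP_def J_def measure_joint by (simp add: zz)
      also have "\<dots> = (\<Sum>x\<in>UNIV. if x = x0 then pmf PX x0 else 0)"
        by (intro sum.cong refl) simp
      finally show ?thesis by simp
    qed
    have c: "PP J (\<lambda>z. \<kappa> (fst z)) z0 = S"
      unfolding PP_def J_def measure_joint S_def by (intro sum.cong refl) (simp add: zz)
    have d: "PP J (\<lambda>z. (\<kappa> (fst z), C (snd z))) z0 = \<beta> x0 * S"
    proof -
      have "PP J (\<lambda>z. (\<kappa> (fst z), C (snd z))) z0 =
            (\<Sum>x\<in>UNIV. pmf PX x * (if \<kappa> x = \<kappa> x0 then \<beta> x else 0))"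
        unfolding PP_def J_def measure_joint by (intro sum.cong refl) (simp add: zz w0_def \<beta>_def)
      also have "\<dots> = (\<Sum>x\<in>UNIV. pmf PX x * (if \<kappa> x = \<kappa> x0 then \<beta> x0 else 0))"
      proof (intro sum.cong refl)
        fix x
        show "pmf PX x * (if \<kappa> x = \<kappa> x0 then \<beta> x else 0) = pmf PX x * (if \<kappa> x = \<kappa> x0 then \<beta> x0 else 0)"
        proof (cases "x \<in> set_pmf PX \<and> \<kappa> x = \<kappa> x0")
          case True
          then have "map_pmf (\<lambda>r. C (psi x r)) PR = map_pmf (\<lambda>r. C (psi x0 r)) PR"
            using Pc x0 by blast
          then have "pmf (map_pmf (\<lambda>r. C (psi x r)) PR) w0 = pmf (map_pmf (\<lambda>r. C (psi x0 r)) PR) w0"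
            by simp
          then have "\<beta> x = \<beta> x0" unfolding \<beta>_def by (simp add: pmf_map vimage_def)
          then show ?thesis by simp
        next
          case False
          then show ?thesis by (auto simp: set_pmf_iff)
        qed
      qed
      also have "\<dots> = \<beta> x0 * S" unfolding S_def sum_distrib_left
        by (intro sum.cong refl) simp
      finally show ?thesis .
    qed
    show ?thesis unfolding a b c d by simp
  qed
  have "ent J (\<lambda>z. (fst z, C (snd z))) + ent J (\<lambda>z. \<kappa> (fst z)) =
        - (\<Sum>z\<in>UNIV. pmf J z * log 2 (PP J (\<lambda>z. (fst z, C (snd z))) z * PP J (\<lambda>z. \<kappa> (fst z)) z))"
    unfolding ent_exp
  proof -
    have "(\<Sum>z\<in>UNIV. pmf J z * log 2 (PP J (\<lambda>z. (fst z, C (snd z))) z * PP J (\<lambda>z. \<kappa> (fst z)) z))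
      = (\<Sum>z\<in>UNIV. pmf J z * log 2 (PP J (\<lambda>z. (fst z, C (snd z))) z) + pmf J z * log 2 (PP J (\<lambda>z. \<kappa> (fst z)) z))"
    proof (intro sum.cong refl)
      fix z show "pmf J z * log 2 (PP J (\<lambda>z. (fst z, C (snd z))) z * PP J (\<lambda>z. \<kappa> (fst z)) z) =
          pmf J z * log 2 (PP J (\<lambda>z. (fst z, C (snd z))) z) + pmf J z * log 2 (PP J (\<lambda>z. \<kappa> (fst z)) z)"
      proof (cases "z \<in> set_pmf J")
        case True
        note p = PP_pos[OF True]
        show ?thesis by (rule plog_mult[OF p p])
      next
        case False
        then show ?thesis by (simp add: set_pmf_iff)
      qed
    qed
    then show "- (\<Sum>z\<in>UNIV. pmf J z * log 2 (PP J (\<lambda>z. (fst z, C (snd z))) z)) +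
        - (\<Sum>z\<in>UNIV. pmf J z * log 2 (PP J (\<lambda>z. \<kappa> (fst z)) z)) =
        - (\<Sum>z\<in>UNIV. pmf J z * log 2 (PP J (\<lambda>z. (fst z, C (snd z))) z * PP J (\<lambda>z. \<kappa> (fst z)) z))"
      by (simp add: sum.distrib)
  qed
  also have "\<dots> = - (\<Sum>z\<in>UNIV. pmf J z * log 2 (PP J fst z * PP J (\<lambda>z. (\<kappa> (fst z), C (snd z))) z))"
  proof (intro arg_cong[where f=uminus] sum.cong refl)
    fix z show "pmf J z * log 2 (PP J (\<lambda>z. (fst z, C (snd z))) z * PP J (\<lambda>z. \<kappa> (fst z)) z) =
       pmf J z * log 2 (PP J fst z * PP J (\<lambda>z. (\<kappa> (fst z), C (snd z))) z)"
      by (cases "z \<in> set_pmf J") (simp_all add: key set_pmf_iff)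
  qed
  also have "\<dots> = ent J fst + ent J (\<lambda>z. (\<kappa> (fst z), C (snd z)))"
  proof -
    have "(\<Sum>z\<in>UNIV. pmf J z * log 2 (PP J fst z * PP J (\<lambda>z. (\<kappa> (fst z), C (snd z))) z))
      = (\<Sum>z\<in>UNIV. pmf J z * log 2 (PP J fst z) + pmf J z * log 2 (PP J (\<lambda>z. (\<kappa> (fst z), C (snd z))) z))"
    proof (intro sum.cong refl)
      fix z show "pmf J z * log 2 (PP J fst z * PP J (\<lambda>z. (\<kappa> (fst z), C (snd z))) z) =
          pmf J z * log 2 (PP J fst z) + pmf J z * log 2 (PP J (\<lambda>z. (\<kappa> (fst z), C (snd z))) z)"
      proof (cases "z \<in> set_pmf J")
        case True
        note p = PP_pos[OF True]
        show ?thesis by (rule plog_mult[OF p p])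
      next
        case False
        then show ?thesis by (simp add: set_pmf_iff)
      qed
    qed
    then show ?thesis unfolding ent_exp by (simp add: sum.distrib)
  qed
  finally show ?thesis .
qed

lemma inst_lemma:
  fixes PX :: "'x::finite pmf" and PR :: "'r::finite pmf" and psi :: "'x \<Rightarrow> 'r \<Rightarrow> 'w::finite"
  assumes sub: "set_pmf PX \<subseteq> S"
    and hA: "\<And>x r. x \<in> S \<Longrightarrow> r \<in> set_pmf PR \<Longrightarrow> sa x = fu (A (psi x r), C (psi x r))"
    and hB: "\<And>x r. x \<in> S \<Longrightarrow> r \<in> set_pmf PR \<Longrightarrow> sb x = fv (C (psi x r), B (psi x r))"
    and P1: "\<And>x x'. x \<in> S \<Longrightarrow> x' \<in> S \<Longrightarrow> sa x = sa x' \<Longrightarrow>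
        map_pmf (\<lambda>r. C (psi x r)) PR = map_pmf (\<lambda>r. C (psi x' r)) PR"
    and P3: "\<And>x x'. x \<in> S \<Longrightarrow> x' \<in> S \<Longrightarrow> sb x = sb x' \<Longrightarrow>
        map_pmf (\<lambda>r. C (psi x r)) PR = map_pmf (\<lambda>r. C (psi x' r)) PR"
  shows "RI (map_pmf (\<lambda>z. (sa (fst z), sb (fst z))) (joint PX PR psi))
     \<le> cmi (joint PX PR psi) (\<lambda>z. A (snd z)) (\<lambda>z. B (snd z)) (\<lambda>z. C (snd z))"
proof -
  define J where "J = joint PX PR psi"
  define q0 where "q0 = map_pmf (\<lambda>x. (sa x, sb x)) PX"
  define \<kappa> where "\<kappa> x = gk_common q0 (sa x, sb x)" for x
  have qeq: "map_pmf (\<lambda>z. (sa (fst z), sb (fst z))) J = q0"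
    unfolding J_def q0_def by (rule q_joint)
  have supp: "\<exists>x\<in>set_pmf PX. \<exists>r\<in>set_pmf PR. z = (x, psi x r)" if "z \<in> set_pmf J" for z
    using set_joint that unfolding J_def by blast
  have RIeq: "RI (map_pmf (\<lambda>z. (sa (fst z), sb (fst z))) J) =
     ent J (\<lambda>z. sa (fst z)) + ent J (\<lambda>z. sb (fst z)) - ent J (\<lambda>z. (sa (fst z), sb (fst z)))
     - ent J (\<lambda>z. \<kappa> (fst z))"
    unfolding RI_def mi_def ent_map by (simp add: qeq \<kappa>_def)
  have st1: "cmi J (\<lambda>z. sa (fst z)) (\<lambda>z. sb (fst z)) (\<lambda>z. C (snd z))
      \<le> cmi J (\<lambda>z. A (snd z)) (\<lambda>z. B (snd z)) (\<lambda>z. C (snd z))"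
  proof (rule core_step1[where fu=fu and fv=fv])
    fix z assume "z \<in> set_pmf J"
    then obtain x r where "x \<in> set_pmf PX" "r \<in> set_pmf PR" "z = (x, psi x r)" using supp by blast
    then show "sa (fst z) = fu (A (snd z), C (snd z))" "sb (fst z) = fv (C (snd z), B (snd z))"
      using hA hB sub by auto
  qed
  define k3 where "k3 v = \<kappa> (SOME x. x \<in> set_pmf PX \<and> sb x = v)" for v
  have hK3: "\<kappa> (fst z) = k3 (sb (fst z))" if zJ: "z \<in> set_pmf J" for z
  proof -
    obtain x r where x: "x \<in> set_pmf PX" and "z = (x, psi x r)" using supp[OF zJ] by blast
    then have fz: "fst z = x" by simp
    have "\<exists>x'. x' \<in> set_pmf PX \<and> sb x' = sb x" using x by blast
    then have sm: "(SOME x'. x' \<in> set_pmf PX \<and> sb x' = sb x) \<in> set_pmf PX \<and>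
               sb (SOME x'. x' \<in> set_pmf PX \<and> sb x' = sb x) = sb x"
      by (rule someI_ex)
    show ?thesis unfolding fz k3_def \<kappa>_def q0_def
      using gk_s3[where sa=sa, OF x conjunct1[OF sm] conjunct2[OF sm, symmetric]] by simp
  qed
  have M: "ent J (\<lambda>z. (fst z, C (snd z))) + ent J (\<lambda>z. \<kappa> (fst z)) =
         ent J fst + ent J (\<lambda>z. (\<kappa> (fst z), C (snd z)))"
    unfolding J_def
  proof (rule markov)
    fix x x' assume x: "x \<in> set_pmf PX" and x': "x' \<in> set_pmf PX" and e: "\<kappa> x = \<kappa> x'"
    have Q1: "\<And>y y'. y \<in> set_pmf PX \<Longrightarrow> y' \<in> set_pmf PX \<Longrightarrow> sa y = sa y' \<Longrightarrow>
        map_pmf (\<lambda>r. C (psi y r)) PR = map_pmf (\<lambda>r. C (psi y' r)) PR"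
      using P1 sub by blast
    have Q3: "\<And>y y'. y \<in> set_pmf PX \<Longrightarrow> y' \<in> set_pmf PX \<Longrightarrow> sb y = sb y' \<Longrightarrow>
        map_pmf (\<lambda>r. C (psi y r)) PR = map_pmf (\<lambda>r. C (psi y' r)) PR"
      using P3 sub by blast
    have e': "gk_common (map_pmf (\<lambda>x. (sa x, sb x)) PX) (sa x, sb x) =
             gk_common (map_pmf (\<lambda>x. (sa x, sb x)) PX) (sa x', sb x')"
      using e unfolding \<kappa>_def q0_def .
    show "map_pmf (\<lambda>r. C (psi x r)) PR = map_pmf (\<lambda>r. C (psi x' r)) PR"
      by (rule gk_const[where \<alpha>="\<lambda>x. map_pmf (\<lambda>r. C (psi x r)) PR" and sa=sa and sb=sb, OF Q1 Q3 x x' e'])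
  qed
  have st2: "ent J (\<lambda>z. sa (fst z)) + ent J (\<lambda>z. sb (fst z)) - ent J (\<lambda>z. (sa (fst z), sb (fst z)))
     - ent J (\<lambda>z. \<kappa> (fst z)) \<le> cmi J (\<lambda>z. sa (fst z)) (\<lambda>z. sb (fst z)) (\<lambda>z. C (snd z))"
    by (rule core_step2[where ku="\<lambda>u. gk_common q0 (u, undefined)" and kv=k3 and su=sa and sv=sb and X=fst])
       (simp add: \<kappa>_def gk_common_def, erule hK3, rule refl, rule refl, rule M)
  show ?thesis using RIeq st1 st2 unfolding J_def by linarith
qed

lemma view1_eq: "view1 w = (fst w, snd (snd w))" by (cases w) (simp add: view1_def)
lemma view2_eq: "view2 w = (fst (snd w), fst w)" by (cases w) (simp add: view2_def)
lemma view3_eq: "view3 w = (snd (snd w), fst (snd w))" by (cases w) (simp add: view3_def)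

lemma prob1_pt: "measure_pmf.prob PR {r. P r} = 1 \<Longrightarrow> r \<in> set_pmf PR \<Longrightarrow> P r"
  using measure_pmf.prob_eq_1[of "{r. P r}" PR] by (simp add: AE_measure_pmf_iff)

lemma W_eqs: "W12 = (\<lambda>z. fst (snd z))" "W23 = (\<lambda>z. fst (snd (snd z)))" "W31 = (\<lambda>z. snd (snd (snd z)))"
  by (auto simp: W12_def W23_def W31_def)

theorem mainTheorem4:
  fixes S :: "('x1::finite \<times> 'x2::finite \<times> 'x3::finite) set"
    and PR :: "'r::finite pmf"
    and psi :: "'x1 \<times> 'x2 \<times> 'x3 \<Rightarrow> 'r \<Rightarrow> 'w1::finite \<times> 'w2::finite \<times> 'w3::finite"
    and PX :: "('x1 \<times> 'x2 \<times> 'x3) pmf"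
  assumes "S \<noteq> {}"
    and "is_3SS S PR psi"
    and "set_pmf PX \<subseteq> S"
  defines "J \<equiv> joint PX PR psi"
  shows "cmi J W12 W23 W31 \<ge> RI (map_pmf (\<lambda>z. (sec1 (fst z), sec3 (fst z))) J) \<and>
         cmi J W23 W31 W12 \<ge> RI (map_pmf (\<lambda>z. (sec2 (fst z), sec1 (fst z))) J) \<and>
         cmi J W31 W12 W23 \<ge> RI (map_pmf (\<lambda>z. (sec3 (fst z), sec2 (fst z))) J)"
proof -
  note sub = assms(3)
  from assms(2) obtain \<phi>1 \<phi>2 \<phi>3 where
    c1: "\<forall>x\<in>S. measure_pmf.prob PR {r. \<phi>1 (view1 (psi x r)) = sec1 x} = 1" and
    c2: "\<forall>x\<in>S. measure_pmf.prob PR {r. \<phi>2 (view2 (psi x r)) = sec2 x} = 1" and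
    c3: "\<forall>x\<in>S. measure_pmf.prob PR {r. \<phi>3 (view3 (psi x r)) = sec3 x} = 1" and
    p1: "\<forall>x\<in>S. \<forall>x'\<in>S. sec1 x = sec1 x' \<longrightarrow>
        map_pmf (\<lambda>r. view1 (psi x r)) PR = map_pmf (\<lambda>r. view1 (psi x' r)) PR" and
    p2: "\<forall>x\<in>S. \<forall>x'\<in>S. sec2 x = sec2 x' \<longrightarrow>
        map_pmf (\<lambda>r. view2 (psi x r)) PR = map_pmf (\<lambda>r. view2 (psi x' r)) PR" and
    p3: "\<forall>x\<in>S. \<forall>x'\<in>S. sec3 x = sec3 x' \<longrightarrow>
        map_pmf (\<lambda>r. view3 (psi x r)) PR = map_pmf (\<lambda>r. view3 (psi x' r)) PR"
    unfolding is_3SS_def by blast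
  have d1: "sec1 x = \<phi>1 (fst (psi x r), snd (snd (psi x r)))" if "x \<in> S" "r \<in> set_pmf PR" for x r
    using prob1_pt[OF c1[rule_format, OF that(1)] that(2)] by (simp add: view1_eq)
  have d2: "sec2 x = \<phi>2 (fst (snd (psi x r)), fst (psi x r))" if "x \<in> S" "r \<in> set_pmf PR" for x r
    using prob1_pt[OF c2[rule_format, OF that(1)] that(2)] by (simp add: view2_eq)
  have d3: "sec3 x = \<phi>3 (snd (snd (psi x r)), fst (snd (psi x r)))" if "x \<in> S" "r \<in> set_pmf PR" for x r
    using prob1_pt[OF c3[rule_format, OF that(1)] that(2)] by (simp add: view3_eq)
  have m1: "map_pmf (\<lambda>r. g (view1 (psi x r))) PR = map_pmf (\<lambda>r. g (view1 (psi x' r))) PR"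
    if "x \<in> S" "x' \<in> S" "sec1 x = sec1 x'" for x x' and g :: "'w1 \<times> 'w3 \<Rightarrow> 'c"
  proof -
    have "map_pmf g (map_pmf (\<lambda>r. view1 (psi x r)) PR) = map_pmf g (map_pmf (\<lambda>r. view1 (psi x' r)) PR)"
      using p1 that by metis
    then show ?thesis by (simp add: map_pmf_comp)
  qed
  have m2: "map_pmf (\<lambda>r. g (view2 (psi x r))) PR = map_pmf (\<lambda>r. g (view2 (psi x' r))) PR"
    if "x \<in> S" "x' \<in> S" "sec2 x = sec2 x'" for x x' and g :: "'w2 \<times> 'w1 \<Rightarrow> 'c"
  proof -
    have "map_pmf g (map_pmf (\<lambda>r. view2 (psi x r)) PR) = map_pmf g (map_pmf (\<lambda>r. view2 (psi x' r)) PR)"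
      using p2 that by metis
    then show ?thesis by (simp add: map_pmf_comp)
  qed
  have m3: "map_pmf (\<lambda>r. g (view3 (psi x r))) PR = map_pmf (\<lambda>r. g (view3 (psi x' r))) PR"
    if "x \<in> S" "x' \<in> S" "sec3 x = sec3 x'" for x x' and g :: "'w3 \<times> 'w2 \<Rightarrow> 'c"
  proof -
    have "map_pmf g (map_pmf (\<lambda>r. view3 (psi x r)) PR) = map_pmf g (map_pmf (\<lambda>r. view3 (psi x' r)) PR)"
      using p3 that by metis
    then show ?thesis by (simp add: map_pmf_comp)
  qed
  have I1: "RI (map_pmf (\<lambda>z. (sec1 (fst z), sec3 (fst z))) J) \<le>
      cmi J (\<lambda>z. fst (snd z)) (\<lambda>z. fst (snd (snd z))) (\<lambda>z. snd (snd (snd z)))"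
    unfolding J_def
  proof (rule inst_lemma[where S=S and fu=\<phi>1 and fv=\<phi>3 and A=fst and B="\<lambda>w. fst (snd w)"
        and C="\<lambda>w. snd (snd w)" and sa=sec1 and sb=sec3, OF sub])
    show "sec1 x = \<phi>1 (fst (psi x r), snd (snd (psi x r)))" if "x \<in> S" "r \<in> set_pmf PR" for x r
      using d1[OF that] .
    show "sec3 x = \<phi>3 (snd (snd (psi x r)), fst (snd (psi x r)))" if "x \<in> S" "r \<in> set_pmf PR" for x r
      using d3[OF that] .
    show "map_pmf (\<lambda>r. snd (snd (psi x r))) PR = map_pmf (\<lambda>r. snd (snd (psi x' r))) PR"
      if "x \<in> S" "x' \<in> S" "sec1 x = sec1 x'" for x x'
      using m1[OF that, of snd] by (simp add: view1_eq)
    show "map_pmf (\<lambda>r. snd (snd (psi x r))) PR = map_pmf (\<lambda>r. snd (snd (psi x' r))) PR"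
      if "x \<in> S" "x' \<in> S" "sec3 x = sec3 x'" for x x'
      using m3[OF that, of fst] by (simp add: view3_eq)
  qed
  have I2: "RI (map_pmf (\<lambda>z. (sec2 (fst z), sec1 (fst z))) J) \<le>
      cmi J (\<lambda>z. fst (snd (snd z))) (\<lambda>z. snd (snd (snd z))) (\<lambda>z. fst (snd z))"
    unfolding J_def
  proof (rule inst_lemma[where S=S and fu=\<phi>2 and fv=\<phi>1 and A="\<lambda>w. fst (snd w)" and B="\<lambda>w. snd (snd w)"
        and C="fst" and sa=sec2 and sb=sec1, OF sub])
    show "sec2 x = \<phi>2 (fst (snd (psi x r)), fst (psi x r))" if "x \<in> S" "r \<in> set_pmf PR" for x r
      using d2[OF that] .
    show "sec1 x = \<phi>1 (fst (psi x r), snd (snd (psi x r)))" if "x \<in> S" "r \<in> set_pmf PR" for x r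
      using d1[OF that] .
    show "map_pmf (\<lambda>r. fst (psi x r)) PR = map_pmf (\<lambda>r. fst (psi x' r)) PR"
      if "x \<in> S" "x' \<in> S" "sec2 x = sec2 x'" for x x'
      using m2[OF that, of snd] by (simp add: view2_eq)
    show "map_pmf (\<lambda>r. fst (psi x r)) PR = map_pmf (\<lambda>r. fst (psi x' r)) PR"
      if "x \<in> S" "x' \<in> S" "sec1 x = sec1 x'" for x x'
      using m1[OF that, of fst] by (simp add: view1_eq)
  qed
  have I3: "RI (map_pmf (\<lambda>z. (sec3 (fst z), sec2 (fst z))) J) \<le>
      cmi J (\<lambda>z. snd (snd (snd z))) (\<lambda>z. fst (snd z)) (\<lambda>z. fst (snd (snd z)))"
    unfolding J_def
  proof (rule inst_lemma[where S=S and fu=\<phi>3 and fv=\<phi>2 and A="\<lambda>w. snd (snd w)" and B="fst"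
        and C="\<lambda>w. fst (snd w)" and sa=sec3 and sb=sec2, OF sub])
    show "sec3 x = \<phi>3 (snd (snd (psi x r)), fst (snd (psi x r)))" if "x \<in> S" "r \<in> set_pmf PR" for x r
      using d3[OF that] .
    show "sec2 x = \<phi>2 (fst (snd (psi x r)), fst (psi x r))" if "x \<in> S" "r \<in> set_pmf PR" for x r
      using d2[OF that] .
    show "map_pmf (\<lambda>r. fst (snd (psi x r))) PR = map_pmf (\<lambda>r. fst (snd (psi x' r))) PR"
      if "x \<in> S" "x' \<in> S" "sec3 x = sec3 x'" for x x'
      using m3[OF that, of snd] by (simp add: view3_eq)
    show "map_pmf (\<lambda>r. fst (snd (psi x r))) PR = map_pmf (\<lambda>r. fst (snd (psi x' r))) PR"
      if "x \<in> S" "x' \<in> S" "sec2 x = sec2 x'" for x x'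
      using m2[OF that, of fst] by (simp add: view2_eq)
  qed
  show ?thesis unfolding W_eqs using I1 I2 I3 by simp
qed

end
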